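(* Let $j\in\mathcal J$ and let $\mathcal S_j=\mathcal Q(\mathcal F_j)$. Then $\{(\hat f_j,\hat h_j):\exists\,\hat z_j\text{ with }((\hat f_j,\hat h_j),\hat z_j)\in\mathcal S_j\}=\mathcal K(\mathcal C^{(\chi)}_j)$, the convex hull of $\{\Xi_j(\tilde b):\tilde b\in\mathcal C^{(\chi)}_j\}$.
   Context: Let $R$ be a finite ring with $q$ elements, $R^-=R\setminus\{0\}$, $\mathcal H$ an $m\times n$ matrix over $R$, $\mathcal J=\{1,\dots,m\}$. Fix $j\in\mathcal J$, let $\mathcal I_j=\{i:\mathcal H_{j,i}\ne0\}=\{i_1,\dots,i_{d_j}\}$ in a fixed order, with $d_j\ge4$. Let $\mathcal F_j$ be the $(d_j-2)\times(2d_j-3)$ matrix over $R$, acting on vectors $(b\mid\chi^j)$ with $b=(b_{i_1},\dots,b_{i_{d_j}})$ and $\chi^j=(\chi^j_1,\dots,\chi^j_{d_j-3})$, whose rows express the equations $b_{i_1}\mathcal H_{j,i_1}+b_{i_2}\mathcal H_{j,i_2}+\chi^j_1=0$; $-\chi^j_\ell+b_{i_{\ell+2}}\mathcal H_{j,i_{\ell+2}}+\chi^j_{\ell+1}=0$ for $\ell=1,\dots,d_j-4$; $-\chi^j_{d_j-3}+b_{i_{d_j-1}}\mathcal H_{j,i_{d_j-1}}+b_{i_{d_j}}\mathcal H_{j,i_{d_j}}=0$; and $\mathcal C^{(\chi)}_j$ is the code of length $2d_j-3$ consisting of all solutions. For any $r\times N$ matrix $\mathcal A$ over $R$ with rows indexed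 by $\rho$, let $\mathcal A$'s local codes be $\mathcal C_\rho=\{g\in R^{\mathrm{supp}(\mathcal A_\rho)}:\sum_{i}g_i\mathcal A_{\rho,i}=0\}$, and let $\mathcal Q(\mathcal A)$ be the set of $(F,W)$, $F=(F_i^{(\alpha)})_{i\le N,\alpha\in R^-}$ real, $W=(W_{\rho,g})_{\rho,g\in\mathcal C_\rho}$ real, with $W_{\rho,g}\ge0$, $\sum_{g\in\mathcal C_\rho}W_{\rho,g}=1$ for each $\rho$, and $F_i^{(\alpha)}=\sum_{g\in\mathcal C_\rho,g_i=\alpha}W_{\rho,g}$ for all $\rho$, $i\in\mathrm{supp}(\mathcal A_\rho)$, $\alpha\in R^-$. For $\mathcal A=\mathcal F_j$, write points of $\mathcal Q(\mathcal F_j)$ as $((\hat f_j,\hat h_j),\hat z_j)$ where $\hat f_j$ collects the $F$-coordinates for the $b$-positions and $\hat h_j$ those for the $\chi^j$-positions. Let $\xi:R\to\{0,1\}^{q-1}$ (coordinates indexed by $R^-$), $\xi(a)^{(\gamma)}=1$ iff $\gamma=a$, and $\Xi_j(b\mid\chi^j)=(\xi(b_{i_1})\mid\cdots\mid\xi(b_{i_{d_j}})\mid\xi(\chi^j_1)\mid\cdots\mid\xi(\chi^j_{d_j-3}))$. *)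

theory Defs
  imports "HOL-Analysis.Analysis"
begin

(* Vectors of length N over a ring are functions nat => 'a that vanish at indices >= N.
   An r x N matrix is a function nat => nat => 'a (row, column), entries outside the
   index ranges being irrelevant. *)

definition row_supp :: "(nat \<Rightarrow> nat \<Rightarrow> 'a::zero) \<Rightarrow> nat \<Rightarrow> nat \<Rightarrow> nat set" where
  "row_supp A N \<rho> = {i. i < N \<and> A \<rho> i \<noteq> 0}"

definition local_code :: "(nat \<Rightarrow> nat \<Rightarrow> 'a::ring) \<Rightarrow> nat \<Rightarrow> nat \<Rightarrow> (nat \<Rightarrow> 'a) set" where
  "local_code A N \<rho> = {g. (\<forall>i. i \<notin> row_supp A N \<rho> \<longrightarrow> g i = 0) \<and>
                          (\<Sum>i\<in>row_supp A N \<rho>. g i * A \<rho> i) = 0}"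

(* the polytope Q(A); F i alpha for i < N, alpha \<noteq> 0; W rho g for rho < r, g in C_rho;
   all other coordinates are fixed to 0 (they do not exist in the paper) *)
definition Qpoly :: "(nat \<Rightarrow> nat \<Rightarrow> 'a::ring) \<Rightarrow> nat \<Rightarrow> nat \<Rightarrow>
     ((nat \<Rightarrow> 'a \<Rightarrow> real) \<times> (nat \<Rightarrow> (nat \<Rightarrow> 'a) \<Rightarrow> real)) set" where
  "Qpoly A r N = {(F, W).
     (\<forall>i \<alpha>. (N \<le> i \<or> \<alpha> = 0) \<longrightarrow> F i \<alpha> = 0) \<and>
     (\<forall>\<rho> g. (r \<le> \<rho> \<or> g \<notin> local_code A N \<rho>) \<longrightarrow> W \<rho> g = 0) \<and>
     (\<forall>\<rho> < r. (\<forall>g \<in> local_code A N \<rho>. W \<rho> g \<ge> 0) \<and>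
               (\<Sum>g\<in>local_code A N \<rho>. W \<rho> g) = 1 \<and>
               (\<forall>i \<in> row_supp A N \<rho>. \<forall>\<alpha>. \<alpha> \<noteq> 0 \<longrightarrow>
                   F i \<alpha> = (\<Sum>g\<in>{g \<in> local_code A N \<rho>. g i = \<alpha>}. W \<rho> g)))}"

definition kernel_code :: "(nat \<Rightarrow> nat \<Rightarrow> 'a::ring) \<Rightarrow> nat \<Rightarrow> nat \<Rightarrow> (nat \<Rightarrow> 'a) set" where
  "kernel_code A r N = {v. (\<forall>i. N \<le> i \<longrightarrow> v i = 0) \<and>
                          (\<forall>\<rho> < r. (\<Sum>i<N. v i * A \<rho> i) = 0)}"

(* The matrix F_j ((d-2) x (2d-3)).  idx k (k < d) is i_{k+1}; column k (k<d) is the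
   b-position b_{i_{k+1}}, column d+l-1 (1 <= l <= d-3) is chi^j_l. Row 0 is the first
   equation, row l (1<=l<=d-4) the l-th middle equation, row d-3 the last equation. *)
definition Fmat :: "(nat \<Rightarrow> nat \<Rightarrow> 'a::ring_1) \<Rightarrow> nat \<Rightarrow> (nat \<Rightarrow> nat) \<Rightarrow> nat \<Rightarrow> nat \<Rightarrow> nat \<Rightarrow> 'a" where
  "Fmat H j idx d \<rho> c =
     (if \<rho> = 0 then
        (if c = 0 then H j (idx 0) else if c = 1 then H j (idx 1) else if c = d then 1 else 0)
      else if \<rho> < d - 3 then
        (if c = d + \<rho> - 1 then -1 else if c = \<rho> + 1 then H j (idx (\<rho> + 1))
         else if c = d + \<rho> then 1 else 0)
      else if \<rho> = d - 3 then
        (if c = 2 * d - 4 then -1 else if c = d - 2 then H j (idx (d - 2))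
         else if c = d - 1 then H j (idx (d - 1)) else 0)
      else 0)"

(* xi : R -> {0,1}^{q-1}, coordinates indexed by R^- (value 0 at the nonexistent coordinate 0) *)
definition xi :: "'a::zero \<Rightarrow> 'a \<Rightarrow> real" where
  "xi a \<gamma> = (if \<gamma> \<noteq> 0 \<and> \<gamma> = a then 1 else 0)"

definition Xi :: "nat \<Rightarrow> (nat \<Rightarrow> 'a::zero) \<Rightarrow> nat \<Rightarrow> 'a \<Rightarrow> real" where
  "Xi N v i \<gamma> = (if i < N then xi (v i) \<gamma> else 0)"

definition fconvex :: "('b \<Rightarrow> 'c \<Rightarrow> real) set \<Rightarrow> bool" where
  "fconvex C \<longleftrightarrow> (\<forall>x\<in>C. \<forall>y\<in>C. \<forall>u::real. 0 \<le> u \<and> u \<le> 1 \<longrightarrow>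
                     (\<lambda>i a. u * x i a + (1 - u) * y i a) \<in> C)"

definition fconvex_hull :: "('b \<Rightarrow> 'c \<Rightarrow> real) set \<Rightarrow> ('b \<Rightarrow> 'c \<Rightarrow> real) set" where
  "fconvex_hull S = \<Inter>{C. S \<subseteq> C \<and> fconvex C}"

end

theory Submission imports Defs "HOL-Probability.Probability_Mass_Function" begin

definition restr :: "nat set \<Rightarrow> (nat \<Rightarrow> 'a::zero) \<Rightarrow> nat \<Rightarrow> 'a" where
  "restr S v = (\<lambda>i. if i \<in> S then v i else 0)"

definition merge :: "nat set \<Rightarrow> (nat \<Rightarrow> 'a) \<Rightarrow> (nat \<Rightarrow> 'a) \<Rightarrow> nat \<Rightarrow> 'a" where
  "merge S v w = (\<lambda>i. if i \<in> S then w i else v i)"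

lemma cancel_lemma:
  fixes Q :: "(nat \<Rightarrow> 'a) pmf"
  shows "bind_pmf (map_pmf (\<lambda>g. g c) Q) (\<lambda>a. cond_pmf Q {g. g c = a}) = Q"
proof -
  have "bind_pmf (map_pmf (\<lambda>g. g c) Q) (\<lambda>a. cond_pmf Q {g. (\<lambda>a g. g c = a) a g}) = Q"
  proof (rule bind_cond_pmf_cancel)
    show "\<And>x. x \<in> set_pmf (map_pmf (\<lambda>g. g c) Q) \<Longrightarrow> set_pmf Q \<inter> {y. y c = x} \<noteq> {}"
      by auto
    show "\<And>y. y \<in> set_pmf Q \<Longrightarrow> set_pmf (map_pmf (\<lambda>g. g c) Q) \<inter> {x. y c = x} \<noteq> {}"
      by auto
    show "\<And>x y. x \<in> set_pmf (map_pmf (\<lambda>g. g c) Q) \<Longrightarrow> y \<in> set_pmf Q \<Longrightarrow> y c = x \<Longrightarrow>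
         measure_pmf.prob Q {y. y c = x} = measure_pmf.prob (map_pmf (\<lambda>g. g c) Q) {x. y c = x}"
      by (auto simp: vimage_def eq_commute)
  qed
  then show ?thesis by simp
qed

lemma glue_step:
  fixes Wp :: "nat \<Rightarrow> (nat \<Rightarrow> 'a::zero) pmf" and supp :: "nat \<Rightarrow> nat set"
  assumes h1: "\<And>\<rho> g i. \<rho> < r \<Longrightarrow> g \<in> set_pmf (Wp \<rho>) \<Longrightarrow> i \<notin> supp \<rho> \<Longrightarrow> g i = 0"
    and h2: "\<And>k. 0 < k \<Longrightarrow> k < r \<Longrightarrow> s k \<in> supp k \<and> s k \<in> supp (k - 1)"
    and h3: "\<And>\<rho> k i. \<rho> < k \<Longrightarrow> k < r \<Longrightarrow> i \<in> supp \<rho> \<Longrightarrow> i \<in> supp k \<Longrightarrow> i = s k"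
    and h4: "\<And>\<rho> \<rho>' c. \<rho> < r \<Longrightarrow> \<rho>' < r \<Longrightarrow> c \<in> supp \<rho> \<Longrightarrow> c \<in> supp \<rho>' \<Longrightarrow>
               map_pmf (\<lambda>g. g c) (Wp \<rho>) = map_pmf (\<lambda>g. g c) (Wp \<rho>')"
    and k: "1 \<le> k" "k \<le> r"
  shows "\<exists>P. (\<forall>\<rho><k. map_pmf (restr (supp \<rho>)) P = Wp \<rho>) \<and>
             (\<forall>v\<in>set_pmf P. \<forall>i. (\<forall>\<rho><k. i \<notin> supp \<rho>) \<longrightarrow> v i = 0)"
  using k(1,2)
proof (induction k rule: dec_induct)
  case base
  have "map_pmf (restr (supp 0)) (Wp 0) = map_pmf id (Wp 0)"
    by (rule map_pmf_cong) (use h1 k in \<open>auto simp: restr_def fun_eq_iff\<close>)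
  then show ?case using h1 k by (intro exI[of _ "Wp 0"]) auto
next
  case (step n)
  have nr: "n \<le> r" using step.prems by simp
  from step.IH[OF nr] obtain P where PP: "(\<forall>\<rho><n. map_pmf (restr (supp \<rho>)) P = Wp \<rho>) \<and>
    (\<forall>v\<in>set_pmf P. \<forall>i. (\<forall>\<rho><n. i \<notin> supp \<rho>) \<longrightarrow> v i = 0)" by (rule exE)
  note P1 = conjunct1[OF PP] and P2 = conjunct2[OF PP]
  have kr: "n < r" "0 < n" using step.prems step.hyps(1) by auto
  define c where "c = s n"
  have c1: "c \<in> supp n" and c2: "c \<in> supp (n - 1)" using h2 kr by (auto simp: c_def)
  have mc: "map_pmf (\<lambda>v. v c) P = map_pmf (\<lambda>g. g c) (Wp n)"
  proof -
    have "map_pmf (\<lambda>v. v c) P = map_pmf (\<lambda>g. g c) (map_pmf (restr (supp (n - 1))) P)"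
      using c2 by (simp add: pmf.map_comp o_def restr_def)
    also have "\<dots> = map_pmf (\<lambda>g. g c) (Wp (n - 1))" using P1 kr by simp
    also have "\<dots> = map_pmf (\<lambda>g. g c) (Wp n)" using h4[of "n-1" n c] kr c1 c2 by simp
    finally show ?thesis .
  qed
  have ne: "set_pmf (Wp n) \<inter> {g. g c = v c} \<noteq> {}" if "v \<in> set_pmf P" for v
  proof -
    have "v c \<in> set_pmf (map_pmf (\<lambda>v. v c) P)" using that by auto
    then have "v c \<in> set_pmf (map_pmf (\<lambda>g. g c) (Wp n))" using mc by simp
    then show ?thesis by auto
  qed
  define P' where "P' = bind_pmf P (\<lambda>v. map_pmf (merge (supp n) v) (cond_pmf (Wp n) {g. g c = v c}))"
  have M1: "map_pmf (restr (supp \<rho>)) P' = Wp \<rho>" if "\<rho> < Suc n" for \<rho>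
  proof (cases "\<rho> = n")
    case True
    have "map_pmf (restr (supp \<rho>)) P' = bind_pmf P (\<lambda>v. cond_pmf (Wp n) {g. g c = v c})"
      unfolding P'_def map_bind_pmf pmf.map_comp
    proof (rule bind_pmf_cong[OF refl])
      fix v assume v: "v \<in> set_pmf P"
      show "map_pmf (restr (supp \<rho>) \<circ> merge (supp n) v) (cond_pmf (Wp n) {g. g c = v c}) =
            cond_pmf (Wp n) {g. g c = v c}"
      proof -
        have "map_pmf (restr (supp \<rho>) \<circ> merge (supp n) v) (cond_pmf (Wp n) {g. g c = v c}) =
            map_pmf id (cond_pmf (Wp n) {g. g c = v c})"
        proof (rule map_pmf_cong[OF refl])
          fix x assume "x \<in> set_pmf (cond_pmf (Wp n) {g. g c = v c})"
          then have x: "x \<in> set_pmf (Wp n)" using set_cond_pmf[OF ne[OF v]] by blast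
          show "(restr (supp \<rho>) \<circ> merge (supp n) v) x = id x"
            unfolding fun_eq_iff o_def restr_def merge_def id_def
            using h1[OF kr(1) x] True by simp
        qed
        then show ?thesis by simp
      qed
    qed
    also have "\<dots> = bind_pmf (map_pmf (\<lambda>v. v c) P) (\<lambda>a. cond_pmf (Wp n) {g. g c = a})"
      by (simp add: bind_map_pmf)
    also have "\<dots> = Wp n" unfolding mc by (rule cancel_lemma)
    finally show ?thesis using True by simp
  next
    case False
    then have rk: "\<rho> < n" using that by simp
    have "map_pmf (restr (supp \<rho>)) P' = bind_pmf P (\<lambda>v. return_pmf (restr (supp \<rho>) v))"
      unfolding P'_def map_bind_pmf pmf.map_comp
    proof (rule bind_pmf_cong[OF refl])
      fix v assume v: "v \<in> set_pmf P"
      have "map_pmf (restr (supp \<rho>) \<circ> merge (supp n) v) (cond_pmf (Wp n) {g. g c = v c}) =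
            map_pmf (\<lambda>_. restr (supp \<rho>) v) (cond_pmf (Wp n) {g. g c = v c})"
      proof (rule map_pmf_cong[OF refl])
        fix x assume "x \<in> set_pmf (cond_pmf (Wp n) {g. g c = v c})"
        then have x: "x c = v c" using set_cond_pmf[OF ne[OF v]] by blast
        show "(restr (supp \<rho>) \<circ> merge (supp n) v) x = restr (supp \<rho>) v"
          unfolding fun_eq_iff o_def restr_def merge_def
          using h3[OF rk kr(1)] x unfolding c_def by metis
      qed
      then show "map_pmf (restr (supp \<rho>) \<circ> merge (supp n) v) (cond_pmf (Wp n) {g. g c = v c}) =
            return_pmf (restr (supp \<rho>) v)" by simp
    qed
    also have "\<dots> = map_pmf (restr (supp \<rho>)) P" by (simp add: map_pmf_def)
    also have "\<dots> = Wp \<rho>" using P1 rk by simp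
    finally show ?thesis .
  qed
  have M2: "\<forall>v\<in>set_pmf P'. \<forall>i. (\<forall>\<rho><Suc n. i \<notin> supp \<rho>) \<longrightarrow> v i = 0"
  proof (intro ballI allI impI)
    fix v i assume v: "v \<in> set_pmf P'" and i: "\<forall>\<rho><Suc n. i \<notin> supp \<rho>"
    have "v \<in> (\<Union>u\<in>set_pmf P. merge (supp n) u ` set_pmf (cond_pmf (Wp n) {g. g c = u c}))"
      using v unfolding P'_def set_bind_pmf set_map_pmf .
    then obtain u where u: "u \<in> set_pmf P" and
      "v \<in> merge (supp n) u ` set_pmf (cond_pmf (Wp n) {g. g c = u c})" by (rule UN_E)
    then obtain w where vv: "v = merge (supp n) u w" by blast
    have "i \<notin> supp n" "\<forall>\<rho><n. i \<notin> supp \<rho>" using i by auto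
    then show "v i = 0" using P2 u unfolding vv merge_def by simp
  qed
  show ?case
  proof (intro exI[of _ P'] conjI)
    show "\<forall>\<rho><Suc n. map_pmf (restr (supp \<rho>)) P' = Wp \<rho>" using M1 by blast
    show "\<forall>v\<in>set_pmf P'. \<forall>i. (\<forall>\<rho><Suc n. i \<notin> supp \<rho>) \<longrightarrow> v i = 0" by (rule M2)
  qed
qed



lemma finite_supp_funs:
  assumes "finite A"
  shows "finite {g::nat \<Rightarrow> 'a::{zero,finite}. \<forall>i. i \<notin> A \<longrightarrow> g i = 0}"
proof (rule finite_imageD[where f="\<lambda>g. restrict g A"])
  show "finite ((\<lambda>g. restrict g A) ` {g::nat \<Rightarrow> 'a. \<forall>i. i \<notin> A \<longrightarrow> g i = 0})"
    by (rule finite_subset[of _ "A \<rightarrow>\<^sub>E (UNIV::'a set)"]) (auto simp: finite_PiE assms)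
  show "inj_on (\<lambda>g. restrict g A) {g::nat \<Rightarrow> 'a. \<forall>i. i \<notin> A \<longrightarrow> g i = 0}"
  proof (rule inj_onI)
    fix x y :: "nat \<Rightarrow> 'a"
    assume x: "x \<in> {g. \<forall>i. i \<notin> A \<longrightarrow> g i = 0}" and y: "y \<in> {g. \<forall>i. i \<notin> A \<longrightarrow> g i = 0}"
      and e: "restrict x A = restrict y A"
    show "x = y"
    proof
      fix i show "x i = y i"
      proof (cases "i \<in> A")
        case True then show ?thesis using fun_cong[OF e, of i] by simp
      next
        case False then show ?thesis using x y by simp
      qed
    qed
  qed
qed

lemma finite_local_code:
  fixes A :: "nat \<Rightarrow> nat \<Rightarrow> 'a::{ring, finite}"
  shows "finite (local_code A N \<rho>)"
proof (rule finite_subset[OF _ finite_supp_funs[of "row_supp A N \<rho>"]])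
  show "local_code A N \<rho> \<subseteq> {g. \<forall>i. i \<notin> row_supp A N \<rho> \<longrightarrow> g i = 0}"
    unfolding local_code_def by blast
  show "finite (row_supp A N \<rho>)" unfolding row_supp_def by simp
qed

lemma fconvex_sum:
  assumes C: "fconvex C" and fin: "finite S" "S \<noteq> {}"
  shows "(\<forall>x\<in>S. u x \<ge> 0) \<Longrightarrow> sum u S = 1 \<Longrightarrow> (\<forall>x\<in>S. f x \<in> C) \<Longrightarrow>
    (\<lambda>i a. \<Sum>x\<in>S. u x * f x i a) \<in> C"
  using fin
proof (induction S arbitrary: u rule: finite_ne_induct)
  case (singleton x)
  then show ?case by simp
next
  case (insert x F)
  have sF: "sum u F = 1 - u x" using insert.prems(2) insert.hyps by simp
  have nn: "\<forall>y\<in>F. u y \<ge> 0" using insert.prems(1) by simp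
  show ?case
  proof (cases "u x = 1")
    case True
    then have "sum u F = 0" using sF by simp
    then have z: "\<forall>y\<in>F. u y = 0" using sum_nonneg_eq_0_iff[OF insert.hyps(1)] nn by blast
    have "(\<lambda>i a. \<Sum>y\<in>insert x F. u y * f y i a) = f x"
      using insert.hyps z True by (simp add: fun_eq_iff)
    then show ?thesis using insert.prems(3) by simp
  next
    case False
    define t where "t = 1 - u x"
    have t0: "t \<ge> 0" using sF sum_nonneg[of F u] nn t_def by simp
    then have tp: "t > 0" using False t_def by simp
    have G: "(\<lambda>i a. \<Sum>y\<in>F. (u y / t) * f y i a) \<in> C"
    proof (rule insert.IH)
      show "\<forall>y\<in>F. 0 \<le> u y / t" using nn tp by simp
      show "sum (\<lambda>y. u y / t) F = 1" using sF tp t_def by (simp add: sum_divide_distrib[symmetric])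
      show "\<forall>y\<in>F. f y \<in> C" using insert.prems(3) by simp
    qed
    have ux: "0 \<le> u x" "u x \<le> 1" using insert.prems(1) t0 t_def by auto
    have "(\<lambda>i a. u x * f x i a + (1 - u x) * (\<lambda>i a. \<Sum>y\<in>F. (u y / t) * f y i a) i a) \<in> C"
      using C[unfolded fconvex_def, rule_format, OF _ G, of "f x" "u x"] insert.prems(3) ux by simp
    moreover have "(\<lambda>i a. u x * f x i a + (1 - u x) * (\<lambda>i a. \<Sum>y\<in>F. (u y / t) * f y i a) i a) =
                   (\<lambda>i a. \<Sum>y\<in>insert x F. u y * f y i a)"
      using insert.hyps tp unfolding t_def[symmetric]
      by (simp add: fun_eq_iff sum_distrib_left)
    ultimately show ?thesis by simp
  qed
qed

lemma Qpoly_convex: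
  assumes A1: "(F1, W1) \<in> Qpoly A r N" and A2: "(F2, W2) \<in> Qpoly A r N" and u: "0 \<le> u" "u \<le> 1"
  shows "(\<lambda>i a. u * F1 i a + (1 - u) * F2 i a, \<lambda>\<rho> g. u * W1 \<rho> g + (1 - u) * W2 \<rho> g) \<in> Qpoly A r N"
proof -
  have s: "(\<Sum>g\<in>X. u * W1 \<rho> g + (1 - u) * W2 \<rho> g) = u * sum (W1 \<rho>) X + (1 - u) * sum (W2 \<rho>) X" for X \<rho>
    by (simp add: sum.distrib sum_distrib_left)
  show ?thesis
    using A1 A2 u unfolding Qpoly_def mem_Collect_eq case_prod_conv s
    by (auto intro!: add_nonneg_nonneg mult_nonneg_nonneg)
qed


lemma row_sum_supp:
  fixes A :: "nat \<Rightarrow> nat \<Rightarrow> 'a::ring"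
  shows "(\<Sum>i<N. v i * A \<rho> i) = (\<Sum>i\<in>row_supp A N \<rho>. v i * A \<rho> i)"
  by (rule sum.mono_neutral_right) (auto simp: row_supp_def)

lemma restr_local_code:
  fixes A :: "nat \<Rightarrow> nat \<Rightarrow> 'a::ring"
  assumes "v \<in> kernel_code A r N" "\<rho> < r"
  shows "restr (row_supp A N \<rho>) v \<in> local_code A N \<rho>"
proof -
  have "(\<Sum>i\<in>row_supp A N \<rho>. restr (row_supp A N \<rho>) v i * A \<rho> i) = (\<Sum>i\<in>row_supp A N \<rho>. v i * A \<rho> i)"
    by (rule sum.cong) (auto simp: restr_def)
  also have "\<dots> = 0" using assms row_sum_supp[where N=N and v=v and A=A and \<rho>=\<rho>] unfolding kernel_code_def by simp
  finally show ?thesis unfolding local_code_def by (auto simp: restr_def)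
qed

lemma Xi_in_Q:
  fixes A :: "nat \<Rightarrow> nat \<Rightarrow> 'a::{ring, finite}"
  assumes v: "v \<in> kernel_code A r N"
  shows "(Xi N v, \<lambda>\<rho> g. if \<rho> < r \<and> g = restr (row_supp A N \<rho>) v then 1 else 0) \<in> Qpoly A r N"
  unfolding Qpoly_def mem_Collect_eq case_prod_conv
proof (intro conjI allI impI ballI)
  fix i and \<alpha> :: 'a assume "N \<le> i \<or> \<alpha> = 0"
  then show "Xi N v i \<alpha> = 0" by (auto simp: Xi_def xi_def)
next
  fix \<rho> g assume "r \<le> \<rho> \<or> g \<notin> local_code A N \<rho>"
  then show "(if \<rho> < r \<and> g = restr (row_supp A N \<rho>) v then 1 else 0) = (0::real)"
    using restr_local_code[OF v] by auto
next
  fix \<rho> g assume "\<rho> < r" "g \<in> local_code A N \<rho>"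
  then show "0 \<le> (if \<rho> < r \<and> g = restr (row_supp A N \<rho>) v then 1 else 0::real)" by simp
next
  fix \<rho> assume r: "\<rho> < r"
  show "(\<Sum>g\<in>local_code A N \<rho>. if \<rho> < r \<and> g = restr (row_supp A N \<rho>) v then 1 else 0::real) = 1"
    using r restr_local_code[OF v r] finite_local_code[of A N \<rho>]
    by (simp add: sum.delta')
next
  fix \<rho> i and \<alpha> :: 'a assume r: "\<rho> < r" and i: "i \<in> row_supp A N \<rho>" and a: "\<alpha> \<noteq> 0"
  have fin: "finite {g \<in> local_code A N \<rho>. g i = \<alpha>}" using finite_local_code[of A N \<rho>] by simp
  have iN: "i < N" using i by (simp add: row_supp_def)
  have "(\<Sum>g\<in>{g \<in> local_code A N \<rho>. g i = \<alpha>}. if \<rho> < r \<and> g = restr (row_supp A N \<rho>) v then 1 else 0::real)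
      = (if restr (row_supp A N \<rho>) v \<in> {g \<in> local_code A N \<rho>. g i = \<alpha>} then 1 else 0)"
    using r fin by (simp add: sum.delta')
  also have "\<dots> = Xi N v i \<alpha>"
    using restr_local_code[OF v r] i iN a by (auto simp: restr_def Xi_def xi_def)
  finally show "Xi N v i \<alpha> = (\<Sum>g\<in>{g \<in> local_code A N \<rho>. g i = \<alpha>}. if \<rho> < r \<and> g = restr (row_supp A N \<rho>) v then 1 else 0)"
    by simp
qed

lemma supset_dir:
  fixes A :: "nat \<Rightarrow> nat \<Rightarrow> 'a::{ring, finite}"
  shows "fconvex_hull (Xi N ` kernel_code A r N) \<subseteq> {F. \<exists>W. (F, W) \<in> Qpoly A r N}"
  unfolding fconvex_hull_def
proof (rule Inter_lower, safe)
  fix v assume "v \<in> kernel_code A r N"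
  then show "\<exists>W. (Xi N v, W) \<in> Qpoly A r N" using Xi_in_Q by blast
next
  show "fconvex {F. \<exists>W. (F, W) \<in> Qpoly A r N}"
    unfolding fconvex_def using Qpoly_convex by blast
qed


lemma measure_pmf_fin:
  assumes "finite L" "set_pmf p \<subseteq> L"
  shows "measure_pmf.prob p X = (\<Sum>x\<in>X \<inter> L. pmf p x)"
proof -
  have "measure_pmf.prob p X = measure_pmf.prob p (X \<inter> set_pmf p)"
    by (simp add: measure_Int_set_pmf)
  also have "\<dots> = (\<Sum>x\<in>X \<inter> set_pmf p. pmf p x)"
    using assms by (intro measure_measure_pmf_finite) (auto intro: finite_subset)
  also have "\<dots> = (\<Sum>x\<in>X \<inter> L. pmf p x)"
    using assms by (intro sum.mono_neutral_left) (auto simp: pmf_eq_0_set_pmf)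
  finally show ?thesis .
qed

lemma pmf_zero_finite:
  fixes p :: "'a::{zero,finite} pmf"
  shows "pmf p 0 = 1 - (\<Sum>a\<in>UNIV - {0}. pmf p a)"
proof -
  have "(\<Sum>a\<in>UNIV. pmf p a) = 1" by (rule sum_pmf_eq_1) auto
  moreover have "(\<Sum>a\<in>UNIV. pmf p a) = pmf p 0 + (\<Sum>a\<in>UNIV - {0}. pmf p a)"
    by (rule sum.remove) auto
  ultimately show ?thesis by simp
qed

lemma pmf_eq_nonzero:
  fixes p q :: "'a::{zero,finite} pmf"
  assumes "\<And>a. a \<noteq> 0 \<Longrightarrow> pmf p a = pmf q a"
  shows "p = q"
proof (rule pmf_eqI)
  fix a show "pmf p a = pmf q a"
  proof (cases "a = 0")
    case True
    have "(\<Sum>a\<in>UNIV - {0}. pmf p a) = (\<Sum>a\<in>UNIV - {0}. pmf q a)"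
      using assms by (intro sum.cong) auto
    then show ?thesis using True pmf_zero_finite[of p] pmf_zero_finite[of q] by simp
  qed (use assms in auto)
qed

lemma subset_dir:
  fixes A :: "nat \<Rightarrow> nat \<Rightarrow> 'a::{ring,finite}"
  assumes FW: "(F, W) \<in> Qpoly A r N" and r1: "1 \<le> r"
   and h2: "\<And>k. 0 < k \<Longrightarrow> k < r \<Longrightarrow> s k \<in> row_supp A N k \<and> s k \<in> row_supp A N (k - 1)"
   and h3: "\<And>\<rho> k i. \<rho> < k \<Longrightarrow> k < r \<Longrightarrow> i \<in> row_supp A N \<rho> \<Longrightarrow> i \<in> row_supp A N k \<Longrightarrow> i = s k"
   and cover: "\<And>c. c < N \<Longrightarrow> \<exists>\<rho><r. c \<in> row_supp A N \<rho>"
  shows "F \<in> fconvex_hull (Xi N ` kernel_code A r N)"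
proof -
  note Q = FW[unfolded Qpoly_def mem_Collect_eq case_prod_conv]
  note Q1 = conjunct1[OF Q] and Q2 = conjunct1[OF conjunct2[OF Q]]
  note Q3 = conjunct2[OF conjunct2[OF Q], rule_format]
  have Fz: "\<And>i \<alpha>. N \<le> i \<or> \<alpha> = 0 \<Longrightarrow> F i \<alpha> = 0" using Q1 by blast
  have Wz: "\<And>\<rho> g. \<rho> < r \<Longrightarrow> g \<notin> local_code A N \<rho> \<Longrightarrow> W \<rho> g = 0" using Q2 by blast
  have Wpos: "0 \<le> W \<rho> g" if "\<rho> < r" "g \<in> local_code A N \<rho>" for \<rho> g
    using conjunct1[OF Q3[OF that(1)]] that(2) by blast
  have Wsum: "sum (W \<rho>) (local_code A N \<rho>) = 1" if "\<rho> < r" for \<rho>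
    using conjunct1[OF conjunct2[OF Q3[OF that]]] .
  have Fm: "F i \<alpha> = (\<Sum>g\<in>{g \<in> local_code A N \<rho>. g i = \<alpha>}. W \<rho> g)"
    if "\<rho> < r" "i \<in> row_supp A N \<rho>" "\<alpha> \<noteq> 0" for \<rho> i \<alpha>
    using conjunct2[OF conjunct2[OF Q3[OF that(1)]]] that(2,3) by blast
  have Wnn: "0 \<le> W \<rho> g" if "\<rho> < r" for \<rho> g
    using Wz[OF that, of g] Wpos[OF that, of g] by (cases "g \<in> local_code A N \<rho>") auto
  have Wint: "(\<integral>\<^sup>+g. ennreal (W \<rho> g) \<partial>count_space UNIV) = 1" if r: "\<rho> < r" for \<rho>
  proof -
    have "(\<integral>\<^sup>+g. ennreal (W \<rho> g) \<partial>count_space UNIV) = (\<Sum>g\<in>local_code A N \<rho>. ennreal (W \<rho> g))"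
      by (rule nn_integral_count_space') (use finite_local_code Wz[OF r] in auto)
    also have "\<dots> = ennreal (sum (W \<rho>) (local_code A N \<rho>))"
      using Wnn[OF r] by simp
    finally show ?thesis using Wsum[OF r] by simp
  qed
  define Wp where "Wp \<rho> = embed_pmf (W \<rho>)" for \<rho>
  have pmfW: "pmf (Wp \<rho>) g = W \<rho> g" if "\<rho> < r" for \<rho> g
    unfolding Wp_def by (rule pmf_embed_pmf) (use Wnn[OF that] Wint[OF that] in auto)
  have setW: "set_pmf (Wp \<rho>) \<subseteq> local_code A N \<rho>" if "\<rho> < r" for \<rho>
    using Wz[OF that] pmfW[OF that] unfolding set_pmf_iff subset_iff mem_Collect_eq by metis
  have measW: "measure_pmf.prob (Wp \<rho>) X = (\<Sum>g\<in>X \<inter> local_code A N \<rho>. W \<rho> g)" if "\<rho> < r" for \<rho> X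
    using measure_pmf_fin[OF finite_local_code setW[OF that]] pmfW[OF that] by simp
  have pmfmap: "pmf (map_pmf (\<lambda>g. g c) (Wp \<rho>)) \<alpha> = F c \<alpha>"
    if "\<rho> < r" "c \<in> row_supp A N \<rho>" "\<alpha> \<noteq> 0" for \<rho> c \<alpha>
  proof -
    have "pmf (map_pmf (\<lambda>g. g c) (Wp \<rho>)) \<alpha> = measure_pmf.prob (Wp \<rho>) {g. g c = \<alpha>}"
      by (simp add: pmf_map vimage_def)
    also have "\<dots> = (\<Sum>g\<in>{g \<in> local_code A N \<rho>. g c = \<alpha>}. W \<rho> g)"
      unfolding measW[OF that(1)] by (rule sum.cong) auto
    finally show ?thesis using Fm[OF that] by simp
  qed
  obtain P where P1: "\<forall>\<rho><r. map_pmf (restr (row_supp A N \<rho>)) P = Wp \<rho>"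
    and P2: "\<forall>v\<in>set_pmf P. \<forall>i. (\<forall>\<rho><r. i \<notin> row_supp A N \<rho>) \<longrightarrow> v i = 0"
  proof -
    have "\<exists>P. (\<forall>\<rho><r. map_pmf (restr (row_supp A N \<rho>)) P = Wp \<rho>) \<and>
             (\<forall>v\<in>set_pmf P. \<forall>i. (\<forall>\<rho><r. i \<notin> row_supp A N \<rho>) \<longrightarrow> v i = 0)"
    proof (rule glue_step[where s = s])
      show "\<And>\<rho> g i. \<rho> < r \<Longrightarrow> g \<in> set_pmf (Wp \<rho>) \<Longrightarrow> i \<notin> row_supp A N \<rho> \<Longrightarrow> g i = 0"
        using setW unfolding local_code_def by blast
      show "\<And>k. 0 < k \<Longrightarrow> k < r \<Longrightarrow> s k \<in> row_supp A N k \<and> s k \<in> row_supp A N (k - 1)" by (rule h2)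
      show "\<And>\<rho> k i. \<rho> < k \<Longrightarrow> k < r \<Longrightarrow> i \<in> row_supp A N \<rho> \<Longrightarrow> i \<in> row_supp A N k \<Longrightarrow> i = s k"
        by (rule h3)
      show "\<And>\<rho> \<rho>' c. \<rho> < r \<Longrightarrow> \<rho>' < r \<Longrightarrow> c \<in> row_supp A N \<rho> \<Longrightarrow> c \<in> row_supp A N \<rho>' \<Longrightarrow>
               map_pmf (\<lambda>g. g c) (Wp \<rho>) = map_pmf (\<lambda>g. g c) (Wp \<rho>')"
        by (rule pmf_eq_nonzero) (simp add: pmfmap)
      show "1 \<le> r" by (rule r1)
      show "r \<le> r" by simp
    qed
    then obtain P0 where PP: "(\<forall>\<rho><r. map_pmf (restr (row_supp A N \<rho>)) P0 = Wp \<rho>) \<and>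
             (\<forall>v\<in>set_pmf P0. \<forall>i. (\<forall>\<rho><r. i \<notin> row_supp A N \<rho>) \<longrightarrow> v i = 0)" by (rule exE)
    show ?thesis by (rule that[OF conjunct1[OF PP] conjunct2[OF PP]])
  qed
  have suppN: "row_supp A N \<rho> \<subseteq> {..<N}" for \<rho> by (auto simp: row_supp_def)
  have Pker: "set_pmf P \<subseteq> kernel_code A r N"
  proof
    fix v assume v: "v \<in> set_pmf P"
    have "v i = 0" if "N \<le> i" for i
    proof -
      have "\<forall>\<rho><r. i \<notin> row_supp A N \<rho>" using that by (auto simp: row_supp_def)
      then show ?thesis using P2 v by blast
    qed
    moreover have "(\<Sum>i<N. v i * A \<rho> i) = 0" if r: "\<rho> < r" for \<rho>
    proof -
      have "restr (row_supp A N \<rho>) v \<in> set_pmf (map_pmf (restr (row_supp A N \<rho>)) P)" using v by simp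
      then have "restr (row_supp A N \<rho>) v \<in> local_code A N \<rho>" using P1 r setW[OF r] by auto
      then have "(\<Sum>i\<in>row_supp A N \<rho>. restr (row_supp A N \<rho>) v i * A \<rho> i) = 0"
        unfolding local_code_def by blast
      moreover have "(\<Sum>i\<in>row_supp A N \<rho>. restr (row_supp A N \<rho>) v i * A \<rho> i) = (\<Sum>i\<in>row_supp A N \<rho>. v i * A \<rho> i)"
        by (rule sum.cong) (auto simp: restr_def)
      ultimately show ?thesis using row_sum_supp[where N=N and v=v and A=A and \<rho>=\<rho>] by simp
    qed
    ultimately show "v \<in> kernel_code A r N" unfolding kernel_code_def by auto
  qed
  have finK: "finite (kernel_code A r N)"
    by (rule finite_subset[OF _ finite_supp_funs[of "{..<N}"]]) (auto simp: kernel_code_def)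
  have finP: "finite (set_pmf P)" using finite_subset[OF Pker finK] .
  have Feq: "F = (\<lambda>i a. \<Sum>v\<in>set_pmf P. pmf P v * Xi N v i a)"
  proof (intro ext)
    fix i a
    show "F i a = (\<Sum>v\<in>set_pmf P. pmf P v * Xi N v i a)"
    proof (cases "N \<le> i \<or> a = 0")
      case True
      then show ?thesis using Fz[OF True] by (auto simp: Xi_def xi_def intro!: sum.neutral)
    next
      case False
      then have iN: "i < N" and a: "a \<noteq> 0" by auto
      obtain \<rho> where r: "\<rho> < r" and i: "i \<in> row_supp A N \<rho>" using cover[OF iN] by blast
      have "F i a = pmf (map_pmf (\<lambda>g. g i) (Wp \<rho>)) a" using pmfmap[OF r i a] by simp
      also have "\<dots> = pmf (map_pmf (\<lambda>g. g i) (map_pmf (restr (row_supp A N \<rho>)) P)) a"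
        using P1 r by simp
      also have "\<dots> = pmf (map_pmf (\<lambda>v. v i) P) a"
        using i by (simp add: pmf.map_comp o_def restr_def)
      also have "\<dots> = measure_pmf.prob P {v. v i = a}"
        by (simp add: pmf_map vimage_def)
      also have "\<dots> = (\<Sum>v\<in>{v. v i = a} \<inter> set_pmf P. pmf P v)"
        by (rule measure_pmf_fin[OF finP]) simp
      also have "\<dots> = (\<Sum>v\<in>set_pmf P. pmf P v * Xi N v i a)"
      proof -
        have "(\<Sum>v\<in>set_pmf P. pmf P v * Xi N v i a) = (\<Sum>v\<in>set_pmf P. if v i = a then pmf P v else 0)"
          using iN a by (intro sum.cong) (auto simp: Xi_def xi_def)
        also have "\<dots> = (\<Sum>v\<in>{v \<in> set_pmf P. v i = a}. pmf P v)"
          by (rule sum.inter_filter[OF finP, symmetric])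
        also have "{v \<in> set_pmf P. v i = a} = {v. v i = a} \<inter> set_pmf P" by blast
        finally show ?thesis by simp
      qed
      finally show ?thesis .
    qed
  qed
  show ?thesis
    unfolding fconvex_hull_def
  proof (rule InterI, safe)
    fix C assume S: "Xi N ` kernel_code A r N \<subseteq> C" and C: "fconvex C"
    have "(\<lambda>i a. \<Sum>v\<in>set_pmf P. pmf P v * Xi N v i a) \<in> C"
    proof (rule fconvex_sum[OF C finP set_pmf_not_empty])
      show "\<forall>x\<in>set_pmf P. 0 \<le> pmf P x" by simp
      show "sum (pmf P) (set_pmf P) = 1" by (rule sum_pmf_eq_1[OF finP]) simp
      show "\<forall>x\<in>set_pmf P. Xi N x \<in> C" using S Pker by auto
    qed
    then show "F \<in> C" using Feq by simp
  qed
qed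



lemma Fmat_0:
  fixes H :: "nat \<Rightarrow> nat \<Rightarrow> 'a::ring_1"
  assumes "H j (idx 0) \<noteq> 0" "H j (idx 1) \<noteq> 0" "4 \<le> d"
  shows "Fmat H j idx d 0 c \<noteq> 0 \<longleftrightarrow> c = 0 \<or> c = 1 \<or> c = d"
proof -
  have e: "Fmat H j idx d 0 c = (if c = 0 then H j (idx 0) else if c = 1 then H j (idx 1) else if c = d then 1 else 0)"
    unfolding Fmat_def by (rule if_P) (rule refl)
  have "d \<noteq> 0" "d \<noteq> 1" using assms(3) by auto
  then show ?thesis unfolding e using assms(1,2) by auto
qed

lemma Fmat_mid:
  fixes H :: "nat \<Rightarrow> nat \<Rightarrow> 'a::ring_1"
  assumes "H j (idx (\<rho>+1)) \<noteq> 0" "4 \<le> d" "0 < \<rho>" "\<rho> < d - 3"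
  shows "Fmat H j idx d \<rho> c \<noteq> 0 \<longleftrightarrow> c = d + \<rho> - 1 \<or> c = \<rho> + 1 \<or> c = d + \<rho>"
proof -
  have n0: "\<rho> \<noteq> 0" using assms(3) by simp
  have e: "Fmat H j idx d \<rho> c = (if c = d + \<rho> - 1 then -1 else if c = \<rho> + 1 then H j (idx (\<rho> + 1))
         else if c = d + \<rho> then 1 else 0)"
    unfolding Fmat_def if_not_P[OF n0] if_P[OF assms(4)] by (rule refl)
  have "d + \<rho> - 1 \<noteq> \<rho> + 1" "d + \<rho> - 1 \<noteq> d + \<rho>" "\<rho> + 1 \<noteq> d + \<rho>" using assms by auto
  then show ?thesis unfolding e using assms(1) by auto
qed

lemma Fmat_last:
  fixes H :: "nat \<Rightarrow> nat \<Rightarrow> 'a::ring_1"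
  assumes "H j (idx (d-2)) \<noteq> 0" "H j (idx (d-1)) \<noteq> 0" "4 \<le> d"
  shows "Fmat H j idx d (d-3) c \<noteq> 0 \<longleftrightarrow> c = 2*d-4 \<or> c = d-2 \<or> c = d-1"
proof -
  have n0: "d - 3 \<noteq> 0" and n1: "\<not> d - 3 < d - 3" using assms(3) by auto
  have e: "Fmat H j idx d (d-3) c = (if c = 2 * d - 4 then -1 else if c = d - 2 then H j (idx (d - 2))
         else if c = d - 1 then H j (idx (d - 1)) else 0)"
    unfolding Fmat_def if_not_P[OF n0] if_not_P[OF n1] if_P[OF refl] by (rule refl)
  have "2*d-4 \<noteq> d-2" "2*d-4 \<noteq> d-1" "d-2 \<noteq> d-1" using assms by auto
  then show ?thesis unfolding e using assms(1,2) by auto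
qed

definition PP :: "nat \<Rightarrow> nat \<Rightarrow> nat \<Rightarrow> bool" where "PP d \<rho> c = (if \<rho> = 0 then c = 0 \<or> c = 1 \<or> c = d
     else if \<rho> < d - 3 then c = d + \<rho> - 1 \<or> c = \<rho> + 1 \<or> c = d + \<rho> else c = 2*d-4 \<or> c = d-2 \<or> c = d-1)"

lemma PP_h3: assumes "4 \<le> d" "\<rho> < k" "k < d - 2" "PP d \<rho> i" "PP d k i" shows "i = d + k - 1"
proof -
  have k0: "k \<noteq> 0" using assms by simp
  have r: "\<rho> < d - 3" using assms by simp
  show ?thesis
  proof (cases "\<rho> = 0")
    case True
    then have "i = 0 \<or> i = 1 \<or> i = d" using assms(4) unfolding PP_def by simp
    moreover have "if k < d - 3 then i = d + k - 1 \<or> i = k + 1 \<or> i = d + k else i = 2*d-4 \<or> i = d-2 \<or> i = d-1"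
      using assms(5) k0 unfolding PP_def by simp
    ultimately show ?thesis using assms(1-3) True by (auto split: if_splits)
  next
    case False
    then have "i = d + \<rho> - 1 \<or> i = \<rho> + 1 \<or> i = d + \<rho>" using assms(4) r unfolding PP_def by simp
    moreover have "if k < d - 3 then i = d + k - 1 \<or> i = k + 1 \<or> i = d + k else i = 2*d-4 \<or> i = d-2 \<or> i = d-1"
      using assms(5) k0 unfolding PP_def by simp
    ultimately show ?thesis using assms(1-3) False by (auto split: if_splits)
  qed
qed

lemma PP_h2: assumes "4 \<le> d" "0 < k" "k < d - 2" shows "PP d k (d + k - 1) \<and> PP d (k - 1) (d + k - 1)"
proof
  show "PP d k (d + k - 1)"
  proof (cases "k < d - 3")
    case True then show ?thesis using assms unfolding PP_def by simp
  next
    case False then have "k = d - 3" using assms by simp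
    then have "k \<noteq> 0" "\<not> k < d - 3" "d + k - 1 = 2 * d - 4" using assms by auto
    then show ?thesis unfolding PP_def by simp
  qed
  show "PP d (k - 1) (d + k - 1)"
  proof (cases "k = 1")
    case True then show ?thesis unfolding PP_def by simp
  next
    case False
    then have "k - 1 \<noteq> 0" "k - 1 < d - 3" "d + (k - 1) = d + k - 1" using assms by auto
    then show ?thesis unfolding PP_def by simp
  qed
qed

lemma PP_cov: assumes "4 \<le> d" "c < 2 * d - 3" shows "\<exists>\<rho><d - 2. PP d \<rho> c"
proof (cases "c \<le> 1 \<or> c = d")
  case True
  have "PP d 0 c" using True unfolding PP_def by auto
  then show ?thesis using assms by (intro exI[of _ 0]) simp
next
  case F1: False
  show ?thesis
  proof (cases "c \<le> d - 3")
    case True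
    have "c - 1 \<noteq> 0" "c - 1 < d - 3" "c = c - 1 + 1" using True F1 by auto
    then have "PP d (c - 1) c" unfolding PP_def by simp
    moreover have "c - 1 < d - 2" using True assms by simp
    ultimately show ?thesis by blast
  next
    case F2: False
    show ?thesis
    proof (cases "c < d")
      case True
      have "d - 3 \<noteq> 0" "\<not> d - 3 < d - 3" "c = d - 2 \<or> c = d - 1" using True F2 assms by auto
      then have "PP d (d - 3) c" unfolding PP_def by simp
      moreover have "d - 3 < d - 2" using assms by simp
      ultimately show ?thesis by blast
    next
      case False
      have "c - d \<noteq> 0" "c - d < d - 3" "c = d + (c - d)" using False F1 assms by auto
      then have "PP d (c - d) c" unfolding PP_def by simp
      moreover have "c - d < d - 2" using \<open>c - d < d - 3\<close> by simp
      ultimately show ?thesis by blast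
    qed
  qed
qed

theorem corollary2:
  fixes H :: "nat \<Rightarrow> nat \<Rightarrow> 'a::{ring_1, finite}"
    and m n j d :: nat and idx :: "nat \<Rightarrow> nat"
  assumes "j < m"
    and "d = card {i. i < n \<and> H j i \<noteq> 0}"
    and "bij_betw idx {..<d} {i. i < n \<and> H j i \<noteq> 0}"
    and "d \<ge> 4"
  shows "{F. \<exists>W. (F, W) \<in> Qpoly (Fmat H j idx d) (d - 2) (2 * d - 3)} =
         fconvex_hull (Xi (2 * d - 3) ` kernel_code (Fmat H j idx d) (d - 2) (2 * d - 3))"
proof
  have d4: "4 \<le> d" using assms(4) .
  have hz: "H j (idx k) \<noteq> 0" if "k < d" for k
    using bij_betw_apply[OF assms(3)] that by auto
  have mem: "c \<in> row_supp (Fmat H j idx d) (2 * d - 3) \<rho> \<longleftrightarrow> PP d \<rho> c" if r: "\<rho> < d - 2" for \<rho> c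
  proof -
    have "c \<in> row_supp (Fmat H j idx d) (2 * d - 3) \<rho> \<longleftrightarrow> c < 2 * d - 3 \<and> Fmat H j idx d \<rho> c \<noteq> 0"
      unfolding row_supp_def by simp
    also have "\<dots> \<longleftrightarrow> PP d \<rho> c"
    proof (cases "\<rho> = 0")
      case True
      then show ?thesis unfolding PP_def using Fmat_0[of H j idx d c] hz[of 0] hz[of 1] d4 by auto
    next
      case False
      show ?thesis
      proof (cases "\<rho> < d - 3")
        case True
        then show ?thesis unfolding PP_def using Fmat_mid[of H j idx \<rho> d c] hz[of "\<rho>+1"] d4 False by auto
      next
        case F2: False
        then have e: "\<rho> = d - 3" using r by simp
        show ?thesis unfolding PP_def e using Fmat_last[of H j idx d c] hz[of "d-2"] hz[of "d-1"] d4 by auto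
      qed
    qed
    finally show ?thesis .
  qed
  show "{F. \<exists>W. (F, W) \<in> Qpoly (Fmat H j idx d) (d - 2) (2 * d - 3)} \<subseteq>
         fconvex_hull (Xi (2 * d - 3) ` kernel_code (Fmat H j idx d) (d - 2) (2 * d - 3))"
  proof
    fix F assume "F \<in> {F. \<exists>W. (F, W) \<in> Qpoly (Fmat H j idx d) (d - 2) (2 * d - 3)}"
    then obtain W where FW: "(F, W) \<in> Qpoly (Fmat H j idx d) (d - 2) (2 * d - 3)" by blast
    show "F \<in> fconvex_hull (Xi (2 * d - 3) ` kernel_code (Fmat H j idx d) (d - 2) (2 * d - 3))"
    proof (rule subset_dir[OF FW, where s = "\<lambda>k. d + k - 1"])
      show "1 \<le> d - 2" using d4 by simp
      show "d + k - 1 \<in> row_supp (Fmat H j idx d) (2 * d - 3) k \<and>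
            d + k - 1 \<in> row_supp (Fmat H j idx d) (2 * d - 3) (k - 1)" if "0 < k" "k < d - 2" for k
        using that mem[of k] mem[of "k-1"] PP_h2[OF d4 that] by simp
      show "i = d + k - 1" if "\<rho> < k" "k < d - 2" "i \<in> row_supp (Fmat H j idx d) (2 * d - 3) \<rho>"
        "i \<in> row_supp (Fmat H j idx d) (2 * d - 3) k" for \<rho> k i
        using that mem[of \<rho> i] mem[of k i] PP_h3[OF d4 that(1,2)] by simp
      show "\<exists>\<rho><d - 2. c \<in> row_supp (Fmat H j idx d) (2 * d - 3) \<rho>" if c: "c < 2 * d - 3" for c
        using PP_cov[OF d4 c] mem by blast
    qed
  qed
  show "fconvex_hull (Xi (2 * d - 3) ` kernel_code (Fmat H j idx d) (d - 2) (2 * d - 3)) \<subseteq>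
        {F. \<exists>W. (F, W) \<in> Qpoly (Fmat H j idx d) (d - 2) (2 * d - 3)}"
    by (rule supset_dir)
qed

end
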